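(* Let $w_0\in\mathbb{N}$ and $w=(w_1,\dots,w_n)$ with each $w_i$ a positive integer at most $2^{n^2}$, let $M=cn$ for a sufficiently large absolute constant $c>0$, let $\lambda=M\|w\|_2$, and define $p_W(x)=\left(\sum_{i=1}^n w_ix_i-w_0\right)^2+\lambda\sum_{i=1}^n x_i(1-x_i)$ and $f_W(x)=\mathrm{sign}(\tfrac12-p_W(x))$. Let $x\in[0,1]^n$ be at $\ell_1$ distance at most $1/(4\|w\|_2)$ from some $z\in\{0,1\}^n$. If $w\cdot z\neq w_0$, then $f_W(x)=-1$.
   Context: $\mathrm{sign}(0)=1$; $\|w\|_2$ is the Euclidean norm. *)

theory Defs
  imports Complex_Main
begin

definition sign0 :: "real \<Rightarrow> int" where
  "sign0 t = (if t \<ge> 0 then 1 else -1)"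

definition wnorm2 :: "nat \<Rightarrow> (nat \<Rightarrow> nat) \<Rightarrow> real" where
  "wnorm2 n w = sqrt (\<Sum>i=1..n. (real (w i))^2)"

definition pW :: "nat \<Rightarrow> (nat \<Rightarrow> nat) \<Rightarrow> nat \<Rightarrow> real \<Rightarrow> (nat \<Rightarrow> real) \<Rightarrow> real" where
  "pW n w w0 lam x = ((\<Sum>i=1..n. real (w i) * x i) - real w0)^2
      + lam * (\<Sum>i=1..n. x i * (1 - x i))"

definition fW :: "nat \<Rightarrow> (nat \<Rightarrow> nat) \<Rightarrow> nat \<Rightarrow> real \<Rightarrow> (nat \<Rightarrow> real) \<Rightarrow> int" where
  "fW n w w0 lam x = sign0 (1/2 - pW n w w0 lam x)"

end

theory Submission
  imports Defs
begin

lemma wi_le_norm: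
  assumes "i \<in> {1..n}"
  shows "real (w i) \<le> wnorm2 n w"
proof -
  have "(real (w i))^2 \<le> (\<Sum>j=1..n. (real (w j))^2)"
    using assms by (intro member_le_sum) auto
  then have "sqrt ((real (w i))^2) \<le> wnorm2 n w"
    unfolding wnorm2_def using real_sqrt_le_mono by blast
  then show ?thesis by simp
qed

lemma main:
  fixes n :: nat and w :: "nat \<Rightarrow> nat" and w0 :: nat and x :: "nat \<Rightarrow> real" and z :: "nat \<Rightarrow> nat"
    and lam :: real
  assumes lam: "lam \<ge> 0"
    and xb: "\<forall>i\<in>{1..n}. 0 \<le> x i \<and> x i \<le> 1"
    and d: "(\<Sum>i=1..n. \<bar>x i - real (z i)\<bar>) \<le> 1 / (4 * wnorm2 n w)"
    and ne: "(\<Sum>i=1..n. w i * z i) \<noteq> w0"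
  shows "fW n w w0 lam x = -1"
proof -
  define N where "N = wnorm2 n w"
  have N0: "N \<ge> 0" unfolding N_def wnorm2_def by (simp add: sum_nonneg)
  define s where "s = (\<Sum>i=1..n. real (w i) * x i)"
  define t where "t = (\<Sum>i=1..n. real (w i) * real (z i))"
  have "\<bar>s - t\<bar> = \<bar>\<Sum>i=1..n. real (w i) * (x i - real (z i))\<bar>"
    unfolding s_def t_def by (simp add: sum_subtractf algebra_simps)
  also have "\<dots> \<le> (\<Sum>i=1..n. \<bar>real (w i) * (x i - real (z i))\<bar>)" by (rule sum_abs)
  also have "\<dots> \<le> (\<Sum>i=1..n. N * \<bar>x i - real (z i)\<bar>)"
    by (intro sum_mono) (simp add: abs_mult N_def mult_right_mono wi_le_norm)
  also have "\<dots> = N * (\<Sum>i=1..n. \<bar>x i - real (z i)\<bar>)" by (simp add: sum_distrib_left)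
  also have "\<dots> \<le> N * (1 / (4 * N))" using mult_left_mono[OF d N0[unfolded N_def]] unfolding N_def .
  also have "\<dots> \<le> 1/4" using N0 by (cases "N = 0") auto
  finally have st: "\<bar>s - t\<bar> \<le> 1/4" .
  have "t = real (\<Sum>i=1..n. w i * z i)" unfolding t_def by simp
  then have "\<bar>t - real w0\<bar> \<ge> 1" using ne by linarith
  then have "\<bar>s - real w0\<bar> \<ge> 3/4" using st by linarith
  then have "(s - real w0)^2 \<ge> (3/4)^2"
    by (metis abs_ge_zero abs_of_nonneg power2_abs power_mono zero_le_divide_iff zero_le_numeral)
  moreover have "lam * (\<Sum>i=1..n. x i * (1 - x i)) \<ge> 0"
    using lam xb by (intro mult_nonneg_nonneg sum_nonneg) auto
  ultimately have "pW n w w0 lam x > 1/2" unfolding pW_def s_def[symmetric] by (simp add: power2_eq_square)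
  then show ?thesis unfolding fW_def sign0_def by simp
qed

theorem claim5p9:
  shows "\<exists>c0>0. \<forall>c\<ge>c0. \<forall>(n::nat) (w::nat \<Rightarrow> nat) (w0::nat) (x::nat \<Rightarrow> real) (z::nat \<Rightarrow> nat).
    (\<forall>i\<in>{1..n}. 0 < w i \<and> w i \<le> 2 ^ (n^2)) \<longrightarrow>
    (\<forall>i\<in>{1..n}. 0 \<le> x i \<and> x i \<le> 1) \<longrightarrow>
    (\<forall>i\<in>{1..n}. z i \<in> {0, 1}) \<longrightarrow>
    (\<Sum>i=1..n. \<bar>x i - real (z i)\<bar>) \<le> 1 / (4 * wnorm2 n w) \<longrightarrow>
    (\<Sum>i=1..n. w i * z i) \<noteq> w0 \<longrightarrow>
    fW n w w0 ((c * real n) * wnorm2 n w) x = -1"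
proof (intro exI[of _ 1] conjI allI impI)
  fix c :: real and n w w0 x z
  assume c: "c \<ge> 1"
    and "\<forall>i\<in>{1..n}. 0 \<le> x i \<and> x i \<le> 1"
    and "(\<Sum>i=1..n. \<bar>x i - real (z i)\<bar>) \<le> 1 / (4 * wnorm2 n w)"
    and "(\<Sum>i=1..n. w i * z i) \<noteq> w0"
  moreover have "(c * real n) * wnorm2 n w \<ge> 0"
    using c unfolding wnorm2_def by (simp add: sum_nonneg)
  ultimately show "fW n w w0 ((c * real n) * wnorm2 n w) x = -1"
    using main by blast
qed simp

end
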